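(* Let $\Omega=\{\Omega_1,\dots,\Omega_N\}$ be a finite set of points with distance function $d$, let $p\notin\Omega$ be a further point (with $d$ defined on $\Omega\cup\{p\}$), and let $r\in\{1,\dots,N\}$. Define, for $t\in\{1,\dots,N\}$, $f(t)=\max\big(d(p,\Omega_t),\ MMJ(\Omega_t,\Omega_r~|~\Omega)\big)$, and $\mathbb{X}=\{f(t): t\in\{1,\dots,N\}\}$. Then $MMJ(p,\Omega_r~|~\Omega+p)=\min(\mathbb{X})$, where $\Omega+p=\Omega\cup\{p\}$.
   Context: $d$ is a distance function (e.g. Euclidean distance) on the points considered, symmetric, nonnegative, with $d(x,x)=0$. For a finite point set $S$, a path from $i$ to $j$ in $S$ is a finite sequence of points of $S$ (at least two) starting at $i$ and ending at $j$, with no repeated points except that start and end may coincide when $i=j$. A jump of a path is the distance $d(x,y)$ between two consecutive points $x,y$, and $max\_jump$ of a path is its largest jump. The Min-Max-Jump distance with context $S$ is $MMJ(i,j~|~S)=\min\{max\_jump(\epsilon): \epsilon \text{ a path from } i \text{ to } j \text{ in } S\}$ for $i,j\in S$, with $MMJ(i,i~|~S)=0$. *)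

theory Defs
  imports Complex_Main
begin

definition is_path :: "'a set \<Rightarrow> 'a \<Rightarrow> 'a \<Rightarrow> 'a list \<Rightarrow> bool" where
  "is_path S i j xs \<longleftrightarrow> 2 \<le> length xs \<and> set xs \<subseteq> S \<and> hd xs = i \<and> last xs = j \<and>
     (if i = j then distinct (tl xs) else distinct xs)"

definition max_jump :: "('a \<Rightarrow> 'a \<Rightarrow> real) \<Rightarrow> 'a list \<Rightarrow> real" where
  "max_jump d xs = Max {d (xs ! k) (xs ! (k + 1)) | k. k + 1 < length xs}"

definition MMJ :: "('a \<Rightarrow> 'a \<Rightarrow> real) \<Rightarrow> 'a \<Rightarrow> 'a \<Rightarrow> 'a set \<Rightarrow> real" where
  "MMJ d i j S = (if i = j then 0 else Min {max_jump d xs | xs. is_path S i j xs})"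

end

theory Submission
  imports Defs
begin

definition jumps :: "('a \<Rightarrow> 'a \<Rightarrow> real) \<Rightarrow> 'a list \<Rightarrow> real set" where
  "jumps d xs = {d (xs ! k) (xs ! (k + 1)) | k. k + 1 < length xs}"

lemma jumps_finite: "finite (jumps d xs)"
proof -
  have "jumps d xs = (\<lambda>k. d (xs ! k) (xs ! (k + 1))) ` {k. k + 1 < length xs}"
    unfolding jumps_def by auto
  moreover have "{k. k + 1 < length xs} \<subseteq> {..<length xs}" by auto
  then have "finite {k. k + 1 < length xs}" using finite_subset by blast
  ultimately show ?thesis by simp
qed

lemma jumps_single: "jumps d [y] = {}"
  unfolding jumps_def by auto

lemma jumps_cons: "xs \<noteq> [] \<Longrightarrow> jumps d (x # xs) = insert (d x (hd xs)) (jumps d xs)"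
proof -
  assume ne: "xs \<noteq> []"
  show ?thesis
  proof (rule set_eqI, rule iffI)
    fix v assume "v \<in> jumps d (x # xs)"
    then obtain k where k: "v = d ((x#xs) ! k) ((x#xs) ! (k + 1))" "k + 1 < length (x#xs)"
      unfolding jumps_def by blast
    show "v \<in> insert (d x (hd xs)) (jumps d xs)"
    proof (cases k)
      case 0 then show ?thesis using k ne by (simp add: hd_conv_nth)
    next
      case (Suc m) then show ?thesis using k unfolding jumps_def by auto
    qed
  next
    fix v assume "v \<in> insert (d x (hd xs)) (jumps d xs)"
    then show "v \<in> jumps d (x # xs)"
    proof
      assume "v = d x (hd xs)"
      then have "v = d ((x#xs) ! 0) ((x#xs) ! (0 + 1))" "0 + 1 < length (x#xs)"
        using ne by (auto simp: hd_conv_nth)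
      then show ?thesis unfolding jumps_def by blast
    next
      assume "v \<in> jumps d xs"
      then obtain k where k: "v = d (xs ! k) (xs ! (k + 1))" "k + 1 < length xs"
        unfolding jumps_def by blast
      then have "v = d ((x#xs) ! (Suc k)) ((x#xs) ! (Suc k + 1))" "Suc k + 1 < length (x#xs)"
        by auto
      then show ?thesis unfolding jumps_def by blast
    qed
  qed
qed

lemma max_jump_jumps: "max_jump d xs = Max (jumps d xs)"
  unfolding max_jump_def jumps_def by simp

lemma jumps_ne: "2 \<le> length xs \<Longrightarrow> jumps d xs \<noteq> {}"
proof -
  assume "2 \<le> length xs"
  then have "d (xs ! 0) (xs ! (0 + 1)) \<in> jumps d xs" unfolding jumps_def by auto
  thus ?thesis by blast
qed

lemma max_jump_single: "max_jump d [x, y] = d x y"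
  unfolding max_jump_jumps by (simp add: jumps_cons jumps_single)

lemma max_jump_cons: "2 \<le> length xs \<Longrightarrow> max_jump d (x # xs) = max (d x (hd xs)) (max_jump d xs)"
  unfolding max_jump_jumps using jumps_ne[of xs d] jumps_finite[of d xs]
  by (subst jumps_cons) (auto simp: Max_insert)

lemma path_set_finite:
  assumes "finite S" "i \<noteq> j"
  shows "finite {max_jump d xs | xs. is_path S i j xs}"
proof -
  have "{xs. is_path S i j xs} \<subseteq> {xs. set xs \<subseteq> S \<and> distinct xs}"
    using assms(2) unfolding is_path_def by auto
  then have "finite {xs. is_path S i j xs}"
    using finite_subset_distinct[OF assms(1)] finite_subset by blast
  then have "finite (max_jump d ` {xs. is_path S i j xs})" by simp
  moreover have "{max_jump d xs | xs. is_path S i j xs} = max_jump d ` {xs. is_path S i j xs}"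
    by auto
  ultimately show ?thesis by simp
qed

lemma path_set_ne:
  assumes "i \<in> S" "j \<in> S" "i \<noteq> j"
  shows "{max_jump d xs | xs. is_path S i j xs} \<noteq> {}"
proof -
  have "is_path S i j [i, j]" using assms unfolding is_path_def by auto
  thus ?thesis by blast
qed

theorem corollary3p4:
  fixes d :: "'a \<Rightarrow> 'a \<Rightarrow> real" and \<Omega> :: "'a set" and p r :: 'a
  assumes "finite \<Omega>"
    and "p \<notin> \<Omega>"
    and "r \<in> \<Omega>"
    and "\<And>x y. x \<in> \<Omega> \<union> {p} \<Longrightarrow> y \<in> \<Omega> \<union> {p} \<Longrightarrow> d x y = d y x"
    and "\<And>x y. x \<in> \<Omega> \<union> {p} \<Longrightarrow> y \<in> \<Omega> \<union> {p} \<Longrightarrow> 0 \<le> d x y"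
    and "\<And>x. x \<in> \<Omega> \<union> {p} \<Longrightarrow> d x x = 0"
  shows "MMJ d p r (\<Omega> \<union> {p}) = Min {max (d p t) (MMJ d t r \<Omega>) | t. t \<in> \<Omega>}"
proof -
  have pr: "p \<noteq> r" using assms(2,3) by auto
  define A where "A = {max_jump d xs | xs. is_path (\<Omega> \<union> {p}) p r xs}"
  define B where "B = {max (d p t) (MMJ d t r \<Omega>) | t. t \<in> \<Omega>}"
  have lhs: "MMJ d p r (\<Omega> \<union> {p}) = Min A" unfolding MMJ_def A_def using pr by simp
  have finA: "finite A" unfolding A_def using path_set_finite[of "\<Omega> \<union> {p}" p r d] assms(1) pr by simp
  have neA: "A \<noteq> {}" unfolding A_def by (rule path_set_ne) (use pr assms(3) in auto)
  have finB: "finite B" unfolding B_def using assms(1) by simp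
  have neB: "B \<noteq> {}" unfolding B_def using assms(3) by blast
  have AB: "\<exists>b\<in>B. b \<le> a" if "a \<in> A" for a
  proof -
    obtain xs where xs: "a = max_jump d xs" "is_path (\<Omega> \<union> {p}) p r xs"
      using \<open>a \<in> A\<close> unfolding A_def by blast
    have dxs: "distinct xs" "2 \<le> length xs" "set xs \<subseteq> \<Omega> \<union> {p}" "hd xs = p" "last xs = r"
      using xs(2) pr unfolding is_path_def by auto
    obtain ys where ys: "xs = p # ys" using dxs by (cases xs) auto
    have ysne: "ys \<noteq> []" using dxs ys by auto
    have ysO: "set ys \<subseteq> \<Omega>" using dxs ys by auto
    define t where "t = hd ys"
    have tO: "t \<in> \<Omega>" using ysO ysne t_def by auto
    have lys: "last ys = r" using dxs ys ysne by auto
    show ?thesis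
    proof (cases "length ys = 1")
      case True
      then have "ys = [t]" using t_def by (cases ys) auto
      then have "t = r" using lys by simp
      have "a = d p r" using xs(1) ys \<open>ys = [t]\<close> \<open>t = r\<close> by (simp add: max_jump_single)
      moreover have "max (d p r) (MMJ d r r \<Omega>) = d p r"
        using assms(5)[of p r] assms(3) by (simp add: MMJ_def)
      moreover have "max (d p r) (MMJ d r r \<Omega>) \<in> B" unfolding B_def using assms(3) by blast
      ultimately show ?thesis by auto
    next
      case False
      then have l2: "2 \<le> length ys" using ysne by (cases ys) (auto simp: Suc_le_eq)
      have tr: "t \<noteq> r"
      proof -
        obtain zs where zs: "ys = t # zs" using ysne t_def by (cases ys) auto
        have "zs \<noteq> []" using zs l2 by auto
        then have "r \<in> set zs" using lys zs by auto
        moreover have "t \<notin> set zs" using dxs(1) ys zs by auto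
        ultimately show ?thesis by auto
      qed
      have pys: "is_path \<Omega> t r ys" using l2 ysO t_def lys tr dxs(1) ys unfolding is_path_def by auto
      have "MMJ d t r \<Omega> \<le> max_jump d ys"
      proof -
        have "max_jump d ys \<in> {max_jump d xs | xs. is_path \<Omega> t r xs}" using pys by blast
        then show ?thesis unfolding MMJ_def using tr Min_le[OF path_set_finite[OF assms(1) tr]] by simp
      qed
      moreover have "a = max (d p t) (max_jump d ys)" using xs(1) ys l2 t_def by (simp add: max_jump_cons)
      moreover have "max (d p t) (MMJ d t r \<Omega>) \<in> B" unfolding B_def using tO by blast
      ultimately show ?thesis by (intro bexI[of _ "max (d p t) (MMJ d t r \<Omega>)"]) auto
    qed
  qed
  have BA: "\<exists>a\<in>A. a \<le> b" if "b \<in> B" for b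
  proof -
    obtain t where t: "t \<in> \<Omega>" "b = max (d p t) (MMJ d t r \<Omega>)" using \<open>b \<in> B\<close> unfolding B_def by blast
    show ?thesis
    proof (cases "t = r")
      case True
      have "is_path (\<Omega> \<union> {p}) p r [p, r]" using pr assms(3) unfolding is_path_def by auto
      moreover have "d p r = max_jump d [p, r]" by (simp add: max_jump_single)
      ultimately have "d p r \<in> A" unfolding A_def by blast
      moreover have "b = d p r" using t True assms(5)[of p r] assms(3) by (simp add: MMJ_def)
      ultimately show ?thesis by auto
    next
      case False
      let ?C = "{max_jump d xs | xs. is_path \<Omega> t r xs}"
      have "Min ?C \<in> ?C" using path_set_finite[OF assms(1) False] path_set_ne[OF t(1) assms(3) False] by (rule Min_in)
      then obtain ys where ys: "Min ?C = max_jump d ys" "is_path \<Omega> t r ys" by blast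
      have m: "MMJ d t r \<Omega> = max_jump d ys" using ys(1) False unfolding MMJ_def by simp
      have dys: "distinct ys" "2 \<le> length ys" "set ys \<subseteq> \<Omega>" "hd ys = t" "last ys = r"
        using ys(2) False unfolding is_path_def by auto
      have "is_path (\<Omega> \<union> {p}) p r (p # ys)" using dys assms(2) pr unfolding is_path_def by auto
      moreover have "max_jump d (p # ys) = b" using t m dys by (simp add: max_jump_cons)
      ultimately have "b \<in> A" unfolding A_def by blast
      thus ?thesis by auto
    qed
  qed
  have "Min A \<le> Min B"
  proof -
    obtain a where "a \<in> A" "a \<le> Min B" using BA Min_in[OF finB neB] by blast
    thus ?thesis using Min_le[OF finA] by (meson order_trans)
  qed
  moreover have "Min B \<le> Min A"
  proof -
    obtain b where "b \<in> B" "b \<le> Min A" using AB Min_in[OF finA neA] by blast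
    thus ?thesis using Min_le[OF finB] by (meson order_trans)
  qed
  ultimately show ?thesis using lhs B_def by simp
qed

end
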